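(* Suppose $(\mu^{(k)},w^{(k)})$ is an exact minimizer of rQEPmin, let $y^{(k)}=(T_k-\mu^{(k)}I)w^{(k)}$ and $z^{(k)}=Q_kw^{(k)}$. Then the residual $r_k=(PAP-\mu^{(k)}I)^2z^{(k)}-\gamma^{-2}b_0b_0^{\top}z^{(k)}$ satisfies $r_k=\beta_{k+1}q_{k+1}e_k^{\top}y^{(k)}+\beta_{k+1}(PAP-\mu^{(k)}I)q_{k+1}e_k^{\top}w^{(k)}$, where $\beta_{k+1}q_{k+1}$ denotes $\widehat q_{k+1}$.
   Context: Let $A\in\mathbb{R}^{n\times n}$ be symmetric, $C\in\mathbb{R}^{n\times m}$ full column rank, $P=I-C(C^{\top}C)^{-1}C^{\top}$, $0\ne b_0\in\mathcal N(C^{\top})$, $\gamma>0$. Lanczos process with $M=PAP$: $q_0=0$, $\beta_1=\|b_0\|$, $q_1=b_0/\|b_0\|$, for $j=1,2,\dots$: $\alpha_j=q_j^{\top}Mq_j$, $\widehat q_{j+1}=Mq_j-\alpha_jq_j-\beta_jq_{j-1}$, $\beta_{j+1}=\|\widehat q_{j+1}\|$, $q_{j+1}=\widehat q_{j+1}/\beta_{j+1}$ when $\beta_{j+1}>0$; assume $\beta_j\ne0$ for $j=2,\dots,k$. $Q_k=[q_1,\dots,q_k]$, $T_k=Q_k^{\top}PAPQ_k$ (tridiagonal). rQEPmin: minimize $\lambda$ over $\lambda\in\mathbb{R}$, $0\ne w\in\mathbb{R}^k$ with $(T_k-\lambda I)^2w=\gamma^{-2}\|b_0\|^2e_1e_1^{\top}w$.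 *)

theory Defs
  imports "HOL-Analysis.Analysis"
begin

definition proj_null :: "real^'m^'n \<Rightarrow> real^'n^'n" where
  "proj_null C = mat 1 - C ** matrix_inv (transpose C ** C) ** transpose C"

text \<open>Lanczos process for a matrix M started at b.
  lanczos_state M b j = (q_j, q_(j+1), beta_(j+1)), with q_0 = 0, q_1 = b / norm b,
  beta_1 = norm b.  (Division by a zero beta yields 0 by Isabelle's convention;
  this case is excluded by the hypotheses where it matters.)\<close>
fun lanczos_state :: "real^'n^'n \<Rightarrow> real^'n \<Rightarrow> nat \<Rightarrow> (real^'n) \<times> (real^'n) \<times> real" where
  "lanczos_state M b 0 = (0, (1 / norm b) *\<^sub>R b, norm b)"
| "lanczos_state M b (Suc j) =
     (let (qp, qc, bc) = lanczos_state M b j;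
          a = qc \<bullet> (M *v qc);
          h = M *v qc - a *\<^sub>R qc - bc *\<^sub>R qp
      in (qc, (1 / norm h) *\<^sub>R h, norm h))"

definition lanczos_q :: "real^'n^'n \<Rightarrow> real^'n \<Rightarrow> nat \<Rightarrow> real^'n" where
  "lanczos_q M b j = fst (lanczos_state M b j)"

definition lanczos_beta :: "real^'n^'n \<Rightarrow> real^'n \<Rightarrow> nat \<Rightarrow> real" where
  "lanczos_beta M b j = snd (snd (lanczos_state M b (j - 1)))"

definition lanczos_alpha :: "real^'n^'n \<Rightarrow> real^'n \<Rightarrow> nat \<Rightarrow> real" where
  "lanczos_alpha M b j = lanczos_q M b j \<bullet> (M *v lanczos_q M b j)"

definition lanczos_qhat :: "real^'n^'n \<Rightarrow> real^'n \<Rightarrow> nat \<Rightarrow> real^'n" where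
  "lanczos_qhat M b j = M *v lanczos_q M b (j - 1)
      - lanczos_alpha M b (j - 1) *\<^sub>R lanczos_q M b (j - 1)
      - lanczos_beta M b (j - 1) *\<^sub>R lanczos_q M b (j - 2)"

text \<open>Entries of T_k = Q_k' M Q_k, indices 1..k.\<close>
definition lanczos_T :: "real^'n^'n \<Rightarrow> real^'n \<Rightarrow> nat \<Rightarrow> nat \<Rightarrow> real" where
  "lanczos_T M b i j = lanczos_q M b i \<bullet> (M *v lanczos_q M b j)"

text \<open>Vectors in R^k are represented as functions nat => real, only indices 1..k matter.
  shifted_apply T lam k w = (T_k - lam I) w.\<close>
definition shifted_apply :: "(nat \<Rightarrow> nat \<Rightarrow> real) \<Rightarrow> real \<Rightarrow> nat \<Rightarrow> (nat \<Rightarrow> real) \<Rightarrow> nat \<Rightarrow> real" where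
  "shifted_apply T lam k w = (\<lambda>i. (\<Sum>j\<in>{1..k}. T i j * w j) - lam * w i)"

definition rQEP_feasible :: "(nat \<Rightarrow> nat \<Rightarrow> real) \<Rightarrow> nat \<Rightarrow> real \<Rightarrow> real \<Rightarrow> real \<Rightarrow> (nat \<Rightarrow> real) \<Rightarrow> bool" where
  "rQEP_feasible T k gamma nb lam w \<longleftrightarrow>
     (\<exists>i\<in>{1..k}. w i \<noteq> 0) \<and>
     (\<forall>i\<in>{1..k}. shifted_apply T lam k (shifted_apply T lam k w) i
                 = (1 / gamma^2) * nb^2 * (if i = 1 then w 1 else 0))"

definition rQEPmin_minimizer :: "(nat \<Rightarrow> nat \<Rightarrow> real) \<Rightarrow> nat \<Rightarrow> real \<Rightarrow> real \<Rightarrow> real \<Rightarrow> (nat \<Rightarrow> real) \<Rightarrow> bool" where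
  "rQEPmin_minimizer T k gamma nb lam w \<longleftrightarrow>
     rQEP_feasible T k gamma nb lam w \<and>
     (\<forall>lam' w'. rQEP_feasible T k gamma nb lam' w' \<longrightarrow> lam \<le> lam')"

end

theory Submission
  imports Defs
begin

lemma transpose_diff: "transpose (A - B) = transpose A - transpose (B::real^'n^'m)"
  by (simp add: transpose_def vec_eq_iff)

lemma proj_sym:
  fixes C :: "real^'m^'n"
  assumes "rank C = CARD('m)"
  shows "transpose (proj_null C) = proj_null C"
proof -
  let ?G = "transpose C ** C"
  have injC: "inj ((*v) C)" using assms full_rank_injective by blast
  have ker: "\<forall>x. ?G *v x = 0 \<longrightarrow> x = 0"
  proof (intro allI impI)
    fix x assume "?G *v x = 0"
    then have "x \<bullet> (?G *v x) = 0" by simp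
    moreover have "x \<bullet> (?G *v x) = (C *v x) \<bullet> (C *v x)"
      by (metis dot_lmul_matrix matrix_vector_mul_assoc vector_transpose_matrix transpose_transpose)
    ultimately have "C *v x = 0" by simp
    then show "x = 0" using injC by (metis inj_eq matrix_vector_mult_0_right)
  qed
  then obtain B where "B ** ?G = mat 1" using matrix_left_invertible_ker by blast
  then have inv: "invertible ?G" using invertible_left_inverse by blast
  define X where "X = matrix_inv ?G"
  have X: "?G ** X = mat 1 \<and> X ** ?G = mat 1"
    unfolding X_def matrix_inv_def using inv unfolding invertible_def by (rule someI_ex)
  have Gs: "transpose ?G = ?G" by (simp add: matrix_transpose_mul)
  have "transpose X ** ?G = mat 1"
    by (metis Gs X matrix_transpose_mul transpose_mat)
  then have "transpose X = X"
    by (metis X matrix_mul_assoc matrix_mul_lid matrix_mul_rid)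
  then show ?thesis
    unfolding proj_null_def X_def[symmetric]
    by (simp add: transpose_diff matrix_transpose_mul matrix_mul_assoc)
qed


lemma lq0: "lanczos_q M b 0 = 0" by (simp add: lanczos_q_def)
lemma lq1: "lanczos_q M b (Suc 0) = (1 / norm b) *\<^sub>R b"
  by (simp add: lanczos_q_def Let_def split: prod.splits)
lemma lb1: "lanczos_beta M b (Suc 0) = norm b" by (simp add: lanczos_beta_def)

lemma lstep:
  "lanczos_q M b (Suc (Suc n)) = (1 / norm (lanczos_qhat M b (Suc (Suc n)))) *\<^sub>R lanczos_qhat M b (Suc (Suc n))
   \<and> lanczos_beta M b (Suc (Suc n)) = norm (lanczos_qhat M b (Suc (Suc n)))"
proof -
  obtain qp qc bc where st: "lanczos_state M b n = (qp, qc, bc)" by (metis prod.exhaust)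
  have q1: "lanczos_q M b (Suc n) = qc" by (simp add: lanczos_q_def st Let_def)
  have q0: "lanczos_q M b n = qp" by (simp add: lanczos_q_def st)
  have b1: "lanczos_beta M b (Suc n) = bc" by (simp add: lanczos_beta_def st)
  have h: "lanczos_qhat M b (Suc (Suc n)) = M *v qc - (qc \<bullet> (M *v qc)) *\<^sub>R qc - bc *\<^sub>R qp"
    by (simp add: lanczos_qhat_def lanczos_alpha_def q1 q0 b1)
  show ?thesis
    by (simp add: lanczos_q_def lanczos_beta_def st Let_def h)
qed

lemma lMq:
  assumes "j \<ge> 1"
  shows "M *v lanczos_q M b j = lanczos_qhat M b (Suc j) + lanczos_alpha M b j *\<^sub>R lanczos_q M b j
     + lanczos_beta M b j *\<^sub>R lanczos_q M b (j - 1)"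
  using assms by (simp add: lanczos_qhat_def algebra_simps)

lemma lqhat_beta:
  assumes "j \<ge> 2" "lanczos_beta M b j \<noteq> 0"
  shows "lanczos_qhat M b j = lanczos_beta M b j *\<^sub>R lanczos_q M b j"
proof -
  obtain n where j: "j = Suc (Suc n)" using assms(1) by (metis add_2_eq_Suc le_Suc_ex)
  show ?thesis using lstep[of M b n] assms(2) unfolding j by auto
qed

definition ortho where
  "ortho M b m \<longleftrightarrow> (\<forall>i l. i \<le> m \<longrightarrow> l \<le> m \<longrightarrow>
     lanczos_q M b i \<bullet> lanczos_q M b l = (if i = l \<and> i \<ge> 1 then 1 else 0))"

lemma qhat_orth:
  assumes sym: "\<forall>x y. (M *v x) \<bullet> y = x \<bullet> (M *v y)"
    and bnz: "\<forall>j\<in>{2..k}. lanczos_beta M b j \<noteq> 0"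
    and on: "ortho M b m" and m: "1 \<le> m" "m \<le> k" and i: "i \<le> m"
  shows "lanczos_qhat M b (Suc m) \<bullet> lanczos_q M b i = 0"
proof -
  let ?q = "lanczos_q M b" and ?a = "lanczos_alpha M b" and ?be = "lanczos_beta M b"
  have ON: "\<And>i l. i \<le> m \<Longrightarrow> l \<le> m \<Longrightarrow> ?q i \<bullet> ?q l = (if i = l \<and> i \<ge> 1 then 1 else 0)"
    using on unfolding ortho_def by blast
  have e: "lanczos_qhat M b (Suc m) \<bullet> ?q i = (M *v ?q m) \<bullet> ?q i - ?a m * (?q m \<bullet> ?q i) - ?be m * (?q (m-1) \<bullet> ?q i)"
    by (simp add: lanczos_qhat_def inner_diff_left)
  consider "i = 0" | "i = m" | "i \<ge> 1 \<and> i = m - 1" | "i \<ge> 1 \<and> i + 2 \<le> m" using i by linarith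
  then show ?thesis
  proof cases
    case 1 then show ?thesis by (simp add: lq0)
  next
    case 2
    have "?q (m-1) \<bullet> ?q m = 0" using ON[of "m-1" m] m by simp
    moreover have "?q m \<bullet> ?q m = 1" using ON[of m m] m by simp
    ultimately show ?thesis using 2 e by (simp add: lanczos_alpha_def inner_commute)
  next
    case 3
    then have m2: "m \<ge> 2" using m by linarith
    have "(M *v ?q m) \<bullet> ?q i = ?q m \<bullet> (M *v ?q i)" using sym by blast
    also have "\<dots> = ?q m \<bullet> (lanczos_qhat M b m + ?a i *\<^sub>R ?q i + ?be i *\<^sub>R ?q (i - 1))"
      using lMq[of i M b] 3 m by simp
    also have "\<dots> = ?be m"
    proof -
      have "lanczos_qhat M b m = ?be m *\<^sub>R ?q m" using lqhat_beta[of m M b] bnz m2 m by auto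
      moreover have "?q m \<bullet> ?q m = 1" using ON[of m m] m by simp
      moreover have "?q m \<bullet> ?q i = 0" using ON[of m i] 3 m by simp
      moreover have "?q m \<bullet> ?q (i-1) = 0" using ON[of m "i-1"] 3 m by simp
      ultimately show ?thesis by (simp add: inner_add_right)
    qed
    finally have a: "(M *v ?q m) \<bullet> ?q i = ?be m" .
    have "?q m \<bullet> ?q i = 0" using ON[of m i] 3 m by simp
    moreover have "?q (m-1) \<bullet> ?q i = 1" using ON[of "m-1" i] 3 m by simp
    ultimately show ?thesis using e a by simp
  next
    case 4
    have "(M *v ?q m) \<bullet> ?q i = ?q m \<bullet> (M *v ?q i)" using sym by blast
    also have "\<dots> = ?q m \<bullet> (lanczos_qhat M b (Suc i) + ?a i *\<^sub>R ?q i + ?be i *\<^sub>R ?q (i - 1))"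
      using lMq[of i M b] 4 by simp
    also have "\<dots> = 0"
    proof -
      have "lanczos_qhat M b (Suc i) = ?be (Suc i) *\<^sub>R ?q (Suc i)" using lqhat_beta[of "Suc i" M b] bnz 4 m by auto
      moreover have "?q m \<bullet> ?q (Suc i) = 0" using ON[of m "Suc i"] 4 by simp
      moreover have "?q m \<bullet> ?q i = 0" using ON[of m i] 4 by simp
      moreover have "?q m \<bullet> ?q (i-1) = 0" using ON[of m "i-1"] 4 by (subgoal_tac "i - 1 \<le> m \<and> m \<noteq> i - 1") (simp, linarith)
      ultimately show ?thesis by (simp add: inner_add_right)
    qed
    finally have a: "(M *v ?q m) \<bullet> ?q i = 0" .
    have "?q m \<bullet> ?q i = 0" using ON[of m i] 4 m by simp
    moreover have "?q (m-1) \<bullet> ?q i = 0" using ON[of "m-1" i] 4 m by (subgoal_tac "m - 1 \<noteq> i") (simp, linarith)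
    ultimately show ?thesis using e a by simp
  qed
qed

lemma ortho_all:
  assumes sym: "\<forall>x y. (M *v x) \<bullet> y = x \<bullet> (M *v y)"
    and bnz: "\<forall>j\<in>{2..k}. lanczos_beta M b j \<noteq> 0" and b: "b \<noteq> 0"
  shows "m \<le> k \<Longrightarrow> ortho M b m"
proof (induction m)
  case 0 then show ?case by (simp add: ortho_def lq0)
next
  case (Suc m)
  show ?case
  proof (cases "m = 0")
    case True
    have "lanczos_q M b 1 \<bullet> lanczos_q M b 1 = 1" using b
      by (simp add: lq1 inner_commute power2_norm_eq_inner[symmetric] field_simps)
    then show ?thesis using True unfolding ortho_def
      by (auto simp: lq0 le_Suc_eq)
  next
    case False
    then obtain n where mn: "m = Suc n" by (metis not0_implies_Suc)
    have on: "ortho M b m" using Suc by simp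
    let ?h = "lanczos_qhat M b (Suc m)"
    have qs: "lanczos_q M b (Suc m) = (1 / norm ?h) *\<^sub>R ?h" and bs: "lanczos_beta M b (Suc m) = norm ?h"
      using lstep[of M b n] mn by auto
    have "norm ?h \<noteq> 0" using bnz Suc.prems bs mn by auto
    then have one: "lanczos_q M b (Suc m) \<bullet> lanczos_q M b (Suc m) = 1"
      unfolding qs by (simp add: inner_commute power2_norm_eq_inner[symmetric] field_simps)
    have zr: "lanczos_q M b (Suc m) \<bullet> lanczos_q M b i = 0" if "i \<le> m" for i
      using qhat_orth[OF sym bnz on _ _ that] False Suc.prems unfolding qs by simp
    show ?thesis unfolding ortho_def
    proof (intro allI impI)
      fix i l assume il: "i \<le> Suc m" "l \<le> Suc m"
      show "lanczos_q M b i \<bullet> lanczos_q M b l = (if i = l \<and> i \<ge> 1 then 1 else 0)"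
      proof (cases "i = Suc m")
        case True then show ?thesis using one zr[of l] il by (cases "l = Suc m") auto
      next
        case F: False
        show ?thesis
        proof (cases "l = Suc m")
          case True then show ?thesis using zr[of i] il F by (simp add: inner_commute)
        next
          case False then show ?thesis using on il F unfolding ortho_def by simp
        qed
      qed
    qed
  qed
qed

lemma proj_Mq:
  assumes sym: "\<forall>x y. (M *v x) \<bullet> y = x \<bullet> (M *v y)"
    and bnz: "\<forall>j\<in>{2..k}. lanczos_beta M b j \<noteq> 0" and b: "b \<noteq> 0"
    and j: "1 \<le> j" "j \<le> k"
  shows "(\<Sum>i\<in>{1..k}. lanczos_T M b i j *\<^sub>R lanczos_q M b i)
       = M *v lanczos_q M b j - (if j = k then lanczos_qhat M b (Suc k) else 0)"
proof -
  let ?q = "lanczos_q M b"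
  define pr where "pr v = (\<Sum>i\<in>{1..k}. (?q i \<bullet> v) *\<^sub>R ?q i)" for v
  have on: "ortho M b k" using ortho_all[OF sym bnz b] by simp
  have pr_add: "pr (u + v) = pr u + pr v" for u v
    by (simp add: pr_def inner_add_right scaleR_add_left sum.distrib)
  have pr_sc: "pr (c *\<^sub>R u) = c *\<^sub>R pr u" for c u
    by (simp add: pr_def scaleR_sum_right)
  have pr_q: "pr (?q l) = ?q l" if "l \<le> k" for l
  proof -
    have "pr (?q l) = (\<Sum>i\<in>{1..k}. (if i = l then ?q l else 0))"
      unfolding pr_def
      by (rule sum.cong) (use on that in \<open>auto simp: ortho_def\<close>)
    also have "\<dots> = ?q l" using that by (cases "l = 0") (auto simp: lq0)
    finally show ?thesis .
  qed
  have "(\<Sum>i\<in>{1..k}. lanczos_T M b i j *\<^sub>R ?q i) = pr (M *v ?q j)"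
    by (simp add: pr_def lanczos_T_def)
  also have "\<dots> = pr (lanczos_qhat M b (Suc j)) + lanczos_alpha M b j *\<^sub>R ?q j
     + lanczos_beta M b j *\<^sub>R ?q (j - 1)"
    using lMq[of j M b] j by (simp add: pr_add pr_sc pr_q)
  also have "pr (lanczos_qhat M b (Suc j)) = (if j = k then 0 else lanczos_qhat M b (Suc j))"
  proof (cases "j = k")
    case True
    have "pr (lanczos_qhat M b (Suc j)) = 0" unfolding pr_def
    proof (intro sum.neutral ballI)
      fix i assume "i \<in> {1..k}"
      then show "(?q i \<bullet> lanczos_qhat M b (Suc j)) *\<^sub>R ?q i = 0"
        using qhat_orth[OF sym bnz on, of i] True j by (simp add: inner_commute)
    qed
    then show ?thesis using True by simp
  next
    case False
    then have "lanczos_qhat M b (Suc j) = lanczos_beta M b (Suc j) *\<^sub>R ?q (Suc j)"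
      using lqhat_beta[of "Suc j" M b] bnz j by auto
    then show ?thesis using False j by (simp add: pr_sc pr_q)
  qed
  finally show ?thesis using lMq[of j M b] j by auto
qed

lemma main_apply:
  assumes sym: "\<forall>x y. (M *v x) \<bullet> y = x \<bullet> (M *v y)"
    and bnz: "\<forall>j\<in>{2..k}. lanczos_beta M b j \<noteq> 0" and b: "b \<noteq> 0" and k: "1 \<le> k"
  shows "(M - mu *\<^sub>R mat 1) *v (\<Sum>j\<in>{1..k}. v j *\<^sub>R lanczos_q M b j)
     = (\<Sum>i\<in>{1..k}. shifted_apply (lanczos_T M b) mu k v i *\<^sub>R lanczos_q M b i)
       + v k *\<^sub>R lanczos_qhat M b (Suc k)"
proof -
  let ?q = "lanczos_q M b" and ?T = "lanczos_T M b" and ?h = "lanczos_qhat M b (Suc k)"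
  have lin: "(M - mu *\<^sub>R mat 1) *v x = M *v x - mu *\<^sub>R x" for x
    by (simp add: matrix_vector_mult_diff_rdistrib matrix_scaleR_vector_ac[symmetric] matrix_vector_mul_lid)
  have "(M - mu *\<^sub>R mat 1) *v (\<Sum>j\<in>{1..k}. v j *\<^sub>R ?q j)
      = (\<Sum>j\<in>{1..k}. v j *\<^sub>R (M *v ?q j)) - mu *\<^sub>R (\<Sum>j\<in>{1..k}. v j *\<^sub>R ?q j)"
    unfolding lin by (simp add: linear_sum[OF matrix_vector_mul_linear] o_def matrix_vector_mult_scaleR)
  also have "(\<Sum>j\<in>{1..k}. v j *\<^sub>R (M *v ?q j))
      = (\<Sum>j\<in>{1..k}. v j *\<^sub>R ((\<Sum>i\<in>{1..k}. ?T i j *\<^sub>R ?q i) + (if j = k then ?h else 0)))"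
    by (rule sum.cong) (use proj_Mq[OF sym bnz b] in auto)
  also have "\<dots> = (\<Sum>j\<in>{1..k}. \<Sum>i\<in>{1..k}. (?T i j * v j) *\<^sub>R ?q i) + (\<Sum>j\<in>{1..k}. (if j = k then v k *\<^sub>R ?h else 0))"
  proof -
    have "\<And>j. v j *\<^sub>R ((\<Sum>i\<in>{1..k}. ?T i j *\<^sub>R ?q i) + (if j = k then ?h else 0))
       = (\<Sum>i\<in>{1..k}. (?T i j * v j) *\<^sub>R ?q i) + (if j = k then v k *\<^sub>R ?h else 0)"
      by (simp add: scaleR_add_right scaleR_sum_right mult.commute)
    then show ?thesis by (simp add: sum.distrib)
  qed
  also have "(\<Sum>j\<in>{1..k}. (if j = k then v k *\<^sub>R ?h else 0)) = v k *\<^sub>R ?h"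
    using k by simp
  also have "(\<Sum>j\<in>{1..k}. \<Sum>i\<in>{1..k}. (?T i j * v j) *\<^sub>R ?q i) = (\<Sum>i\<in>{1..k}. (\<Sum>j\<in>{1..k}. ?T i j * v j) *\<^sub>R ?q i)"
    by (subst sum.swap) (simp add: scaleR_sum_left)
  finally show ?thesis
    by (simp add: shifted_apply_def scaleR_diff_left sum_subtractf scaleR_sum_right algebra_simps)
qed

theorem proposition3p2:
  fixes A :: "real^'n^'n" and C :: "real^'m^'n" and b0 :: "real^'n"
    and gamma mu :: real and k :: nat and w :: "nat \<Rightarrow> real"
  defines "P \<equiv> proj_null C"
  defines "M \<equiv> P ** A ** P"
  defines "T \<equiv> lanczos_T M b0"
  defines "y \<equiv> shifted_apply T mu k w"
  defines "z \<equiv> (\<Sum>j\<in>{1..k}. w j *\<^sub>R lanczos_q M b0 j)"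
  assumes symA: "transpose A = A"
    and rankC: "rank C = CARD('m)"
    and b0_null: "transpose C *v b0 = 0"
    and b0_nz: "b0 \<noteq> 0"
    and gamma_pos: "gamma > 0"
    and k_pos: "k \<ge> 1"
    and beta_nz: "\<forall>j\<in>{2..k}. lanczos_beta M b0 j \<noteq> 0"
    and minimizer: "rQEPmin_minimizer T k gamma (norm b0) mu w"
  shows "(M - mu *\<^sub>R mat 1) *v ((M - mu *\<^sub>R mat 1) *v z) - (1 / gamma^2) *\<^sub>R ((b0 \<bullet> z) *\<^sub>R b0)
         = y k *\<^sub>R lanczos_qhat M b0 (k + 1)
           + w k *\<^sub>R ((M - mu *\<^sub>R mat 1) *v lanczos_qhat M b0 (k + 1))"
proof -
  let ?q = "lanczos_q M b0" and ?h = "lanczos_qhat M b0 (Suc k)"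
  let ?S = "M - mu *\<^sub>R mat 1"
  have Ps: "transpose P = P" unfolding P_def using proj_sym[OF rankC] .
  have Ms: "transpose M = M" unfolding M_def
    by (simp add: matrix_transpose_mul Ps symA matrix_mul_assoc)
  have sym: "\<forall>x y. (M *v x) \<bullet> y = x \<bullet> (M *v y)"
  proof (intro allI)
    fix x y
    have "(M *v x) \<bullet> y = (transpose M *v x) \<bullet> y" using Ms by simp
    also have "\<dots> = x \<bullet> (M *v y)" by (simp add: dot_lmul_matrix)
    finally show "(M *v x) \<bullet> y = x \<bullet> (M *v y)" .
  qed
  have feas: "rQEP_feasible T k gamma (norm b0) mu w" using minimizer rQEPmin_minimizer_def by blast
  have on: "ortho M b0 k" using ortho_all[OF sym beta_nz b0_nz] by simp
  have R1: "?S *v z = (\<Sum>i\<in>{1..k}. y i *\<^sub>R ?q i) + w k *\<^sub>R ?h"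
    unfolding z_def y_def T_def using main_apply[OF sym beta_nz b0_nz k_pos] by simp
  have R2: "?S *v (\<Sum>i\<in>{1..k}. y i *\<^sub>R ?q i) = (\<Sum>i\<in>{1..k}. shifted_apply T mu k y i *\<^sub>R ?q i) + y k *\<^sub>R ?h"
    unfolding T_def using main_apply[OF sym beta_nz b0_nz k_pos] by simp
  have "(\<Sum>i\<in>{1..k}. shifted_apply T mu k y i *\<^sub>R ?q i)
      = (\<Sum>i\<in>{1..k}. (if i = 1 then ((1 / gamma^2) * (norm b0)^2 * w 1) *\<^sub>R ?q 1 else 0))"
    by (rule sum.cong) (use feas in \<open>auto simp: rQEP_feasible_def y_def\<close>)
  also have "\<dots> = ((1 / gamma^2) * (norm b0)^2 * w 1) *\<^sub>R ?q 1" using k_pos by simp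
  finally have R3: "(\<Sum>i\<in>{1..k}. shifted_apply T mu k y i *\<^sub>R ?q i) = ((1 / gamma^2) * (norm b0)^2 * w 1) *\<^sub>R ?q 1" .
  have b0q: "b0 = norm b0 *\<^sub>R ?q 1" using b0_nz by (simp add: lq1)
  have "b0 \<bullet> z = (\<Sum>j\<in>{1..k}. w j * (b0 \<bullet> ?q j))" unfolding z_def by (simp add: inner_sum_right)
  also have "\<dots> = (\<Sum>j\<in>{1..k}. (if j = 1 then w 1 * norm b0 else 0))"
  proof (rule sum.cong)
    fix j assume "j \<in> {1..k}"
    then have "?q 1 \<bullet> ?q j = (if j = 1 then 1 else 0)" using on k_pos unfolding ortho_def by auto
    then show "w j * (b0 \<bullet> ?q j) = (if j = 1 then w 1 * norm b0 else 0)"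
      by (subst b0q) (auto simp: inner_scaleR_left)
  qed simp
  also have "\<dots> = w 1 * norm b0" using k_pos by simp
  finally have bz: "b0 \<bullet> z = w 1 * norm b0" .
  have lin: "?S *v (u + v) = ?S *v u + ?S *v v" "?S *v (c *\<^sub>R u) = c *\<^sub>R (?S *v u)" for u v c
    by (simp_all add: matrix_vector_right_distrib matrix_vector_mult_scaleR)
  have "?S *v (?S *v z) = ((1 / gamma^2) * (norm b0)^2 * w 1) *\<^sub>R ?q 1 + y k *\<^sub>R ?h + w k *\<^sub>R (?S *v ?h)"
    unfolding R1 lin R2 R3 by simp
  moreover have "(1 / gamma^2) *\<^sub>R ((b0 \<bullet> z) *\<^sub>R b0) = ((1 / gamma^2) * (norm b0)^2 * w 1) *\<^sub>R ?q 1"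
    unfolding bz by (subst (2) b0q) (simp add: power2_eq_square)
  ultimately show ?thesis by simp
qed

end
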